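(* Let $K\ge0$, $N\in[n,\infty)$ with $n\ge 2$, $R>0$, and set $\alpha:=N\,\mathcal H(2\sqrt{K/N}\,R)$, where $\mathcal H(t)=t\coth t$ (with $\mathcal H(0)=1$); in particular $\alpha\ge2$. Then there exists a function $h:[0,\infty)\to\mathbb R$ such that: (i) $h\in C^2[0,\infty)$ and $h'(0)=0$; (ii) $\inf_{[0,\infty)}h\ge-\alpha^2 18^\alpha$; (iii) for $t>1/18$: $h''(t)-\frac{h'(t)}t=-\alpha(\alpha+2)t^{-(\alpha+2)}<0$ and $\frac{h'(t)}t=\alpha t^{-(\alpha+2)}>0$; for $0<t\le1/18$: $\big|h''(t)-\frac{h'(t)}t\big|\le 972\,\alpha^2 18^\alpha$ and $0<\frac{h'(t)}t\le 972\,\alpha^2 18^\alpha$. *)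

theory Defs
  imports "HOL-Analysis.Analysis"
begin

definition Hcoth :: "real \<Rightarrow> real" where
  "Hcoth t = (if t = 0 then 1 else t * cosh t / sinh t)"

end

theory Submission
  imports Defs
begin


lemma sinh_le_xcosh: fixes x :: real assumes "x \<ge> 0" shows "sinh x \<le> x * cosh x"
proof -
  have "(\<lambda>x. x * cosh x - sinh x) 0 \<le> (\<lambda>x. x * cosh x - sinh x) x"
  proof (rule DERIV_nonneg_imp_nondecreasing[OF assms])
    fix y :: real assume "0 \<le> y" "y \<le> x"
    show "\<exists>d. ((\<lambda>x. x * cosh x - sinh x) has_real_derivative d) (at y) \<and> d \<ge> 0"
      by (rule exI[of _ "y * sinh y"]) (auto intro!: derivative_eq_intros simp: \<open>0 \<le> y\<close>)
  qed
  then show ?thesis by simp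
qed

lemma Hcoth_ge1: fixes x :: real assumes "x \<ge> 0" shows "Hcoth x \<ge> 1"
proof (cases "x = 0")
  case False
  then have "sinh x > 0" using assms by simp
  then show ?thesis using sinh_le_xcosh[OF assms] False by (simp add: Hcoth_def field_simps)
qed (simp add: Hcoth_def)

lemma pw_deriv:
  fixes f g f' g' :: "real \<Rightarrow> real" and a t :: real
  assumes "a > 0"
    and f: "\<And>t. (f has_real_derivative f' t) (at t)"
    and g: "\<And>t. t > 0 \<Longrightarrow> (g has_real_derivative g' t) (at t)"
    and e: "f a = g a" "f' a = g' a"
  shows "((\<lambda>t. if t \<le> a then f t else g t) has_real_derivative (if t \<le> a then f' t else g' t)) (at t)"
proof -
  consider "t < a" | "t = a" | "t > a" by linarith
  then show ?thesis
  proof cases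
    case 1
    show ?thesis
      by (rule has_field_derivative_transform_within_open[of f _ _ "{..<a}"]) (use 1 f in auto)
  next
    case 3
    show ?thesis
      by (rule has_field_derivative_transform_within_open[of g _ _ "{a<..}"]) (use 3 g assms in auto)
  next
    case 2
    have fa: "(f has_derivative ((*) (f' a))) (at a within {..a} \<union> (closure {..a} \<inter> closure {a<..}))"
      using f[of a] by (simp add: has_field_derivative_def has_derivative_at_withinI)
    have ga: "(g has_derivative ((*) (g' a))) (at a within {a<..} \<union> (closure {..a} \<inter> closure {a<..}))"
      using g[of a] assms(1) by (simp add: has_field_derivative_def has_derivative_at_withinI)
    have "((\<lambda>x. if x \<in> {..a} then f x else g x) has_derivative
      (if a \<in> {..a} then ((*) (f' a)) else ((*) (g' a)))) (at a within ({..a} \<union> {a<..}))"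
      by (rule has_derivative_If_within_closures[where f'="\<lambda>_. (*) (f' a)" and g'="\<lambda>_. (*) (g' a)"])
         (use fa ga e in auto)
    moreover have "{..a} \<union> {a<..} = (UNIV::real set)" by auto
    ultimately show ?thesis using 2 by (simp add: has_field_derivative_def mult.commute)
  qed
qed


lemma main:
  fixes \<alpha> :: real assumes al: "\<alpha> \<ge> 2"
  shows "\<exists>h h' h'' :: real \<Rightarrow> real.
    (\<forall>t\<ge>0. (h has_real_derivative h' t) (at t within {0..})) \<and>
    (\<forall>t\<ge>0. (h' has_real_derivative h'' t) (at t within {0..})) \<and>
    continuous_on {0..} h'' \<and>
    h' 0 = 0 \<and>
    (\<forall>t\<ge>0. h t \<ge> - (\<alpha>\<^sup>2 * 18 powr \<alpha>)) \<and>
    (\<forall>t>1/18. h'' t - h' t / t = - \<alpha> * (\<alpha> + 2) * t powr (- (\<alpha> + 2)) \<and>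
              h'' t - h' t / t < 0 \<and>
              h' t / t = \<alpha> * t powr (- (\<alpha> + 2)) \<and> h' t / t > 0) \<and>
    (\<forall>t. 0 < t \<and> t \<le> 1/18 \<longrightarrow>
          \<bar>h'' t - h' t / t\<bar> \<le> 972 * \<alpha>\<^sup>2 * 18 powr \<alpha> \<and>
          0 < h' t / t \<and> h' t / t \<le> 972 * \<alpha>\<^sup>2 * 18 powr \<alpha>)"
proof -
  define E where "E = (18::real) powr \<alpha>"
  have E: "E > 0" by (simp add: E_def)
  define P where "P = 324*\<alpha>*(\<alpha>+3)*E"
  define B where "B = -5832*\<alpha>*(\<alpha>+2)*E"
  define D where "D = -(1 + \<alpha>^2/6 + 5*\<alpha>/6)*E"
  define a :: real where "a = 1/18"
  define f0 where "f0 = (\<lambda>t::real. D + P*t^2/2 + B*t^3/3)"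
  define f1 where "f1 = (\<lambda>t::real. P*t + B*t^2)"
  define f2 where "f2 = (\<lambda>t::real. P + 2*B*t)"
  define g0 where "g0 = (\<lambda>t::real. -(t powr (-\<alpha>)))"
  define g1 where "g1 = (\<lambda>t::real. \<alpha> * t powr (-(\<alpha>+1)))"
  define g2 where "g2 = (\<lambda>t::real. -\<alpha>*(\<alpha>+1) * t powr (-(\<alpha>+2)))"
  define h where "h = (\<lambda>t. if t \<le> a then f0 t else g0 t)"
  define h' where "h' = (\<lambda>t. if t \<le> a then f1 t else g1 t)"
  define h'' where "h'' = (\<lambda>t. if t \<le> a then f2 t else g2 t)"
  have a0: "a > 0" by (simp add: a_def)
  have pm: "\<And>x. a powr (-x) = 18 powr x" by (simp add: a_def powr_divide powr_minus)
  have pa0: "a powr (-\<alpha>) = E" by (simp add: pm E_def)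
  have pa1: "a powr (-(\<alpha>+1)) = 18*E" unfolding pm E_def by (simp add: powr_add)
  have pa2: "a powr (-(\<alpha>+2)) = 324*E" unfolding pm E_def by (simp add: powr_add)
  have df0: "\<And>t. (f0 has_real_derivative f1 t) (at t)"
    unfolding f0_def f1_def by (auto intro!: derivative_eq_intros simp: power2_eq_square)
  have df1: "\<And>t. (f1 has_real_derivative f2 t) (at t)"
    unfolding f2_def f1_def by (auto intro!: derivative_eq_intros simp: power2_eq_square)
  have dg0: "\<And>t. t > 0 \<Longrightarrow> (g0 has_real_derivative g1 t) (at t)"
    unfolding g0_def g1_def by (auto intro!: derivative_eq_intros)
  have dg1: "\<And>t. t > 0 \<Longrightarrow> (g1 has_real_derivative g2 t) (at t)"
    unfolding g2_def g1_def
  proof -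
    fix t :: real assume "t > 0"
    have c: "-2 - \<alpha> = -\<alpha> - 2" by simp
    show "((\<lambda>t. \<alpha> * t powr - (\<alpha> + 1)) has_real_derivative - \<alpha> * (\<alpha> + 1) * t powr - (\<alpha> + 2)) (at t)"
      using \<open>t > 0\<close> by (auto intro!: derivative_eq_intros) (simp only: c, simp add: algebra_simps)
  qed
  have e0: "f0 a = g0 a" using pa0 unfolding f0_def g0_def D_def P_def B_def a_def
    by (simp add: field_simps power2_eq_square power3_eq_cube) 
  have e1: "f1 a = g1 a" using pa1 unfolding f1_def g1_def P_def B_def a_def
    by (simp add: field_simps power2_eq_square) 
  have e2: "f2 a = g2 a" using pa2 unfolding f2_def g2_def P_def B_def a_def
    by (simp add: field_simps) 
  have D1: "\<forall>t\<ge>0. (h has_real_derivative h' t) (at t within {0..})"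
    unfolding h_def h'_def using pw_deriv[OF a0 df0 dg0 e0 e1] has_field_derivative_at_within by blast
  have D2: "\<forall>t\<ge>0. (h' has_real_derivative h'' t) (at t within {0..})"
    unfolding h''_def h'_def using pw_deriv[OF a0 df1 dg1 e1 e2] has_field_derivative_at_within by blast
  have C0: "continuous_on {0..} (\<lambda>x. if (\<lambda>x. x) x \<le> a then f2 x else g2 x)"
  proof (rule continuous_on_cases_le)
    show "continuous_on {x \<in> {0..}. x \<le> a} f2" unfolding f2_def by (intro continuous_intros)
    show "continuous_on {x \<in> {0..}. a \<le> x} g2" unfolding g2_def using a0
      by (intro continuous_intros) auto
    show "\<And>x. x \<in> {0..} \<Longrightarrow> x = a \<Longrightarrow> f2 x = g2 x" using e2 by simp
  qed (intro continuous_intros)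
  have C: "continuous_on {0..} h''" using C0 unfolding h''_def by simp
  have Z: "h' 0 = 0" unfolding h'_def f1_def using a0 by simp
  have al0: "\<alpha> > 0" using al by simp
  have sq: "\<alpha>*\<alpha> \<ge> 2*\<alpha>" using al al0 by (simp add: mult_right_mono)
  have Bn: "B < 0" unfolding B_def using al0 E by (simp add: mult_pos_pos)
  have LB: "\<forall>t\<ge>0. h t \<ge> - (\<alpha>\<^sup>2 * E)"
  proof (intro allI impI)
    fix t :: real assume t0: "t \<ge> 0"
    show "h t \<ge> - (\<alpha>\<^sup>2 * E)"
    proof (cases "t \<le> a")
      case True
      have "B * t \<ge> B * a" using True Bn by (simp add: mult_le_cancel_left)
      then have q: "P/2 + B*t/3 \<ge> P/2 + B*a/3" by simp
      have "P/2 + B*a/3 = 162*\<alpha>*(\<alpha>+3)*E - 108*\<alpha>*(\<alpha>+2)*E"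
        unfolding P_def B_def a_def by simp
      also have "\<dots> = \<alpha>*(54*\<alpha>+270)*E" by (simp add: algebra_simps)
      also have "\<dots> \<ge> 0" using al0 E by simp
      finally have "P/2 + B*t/3 \<ge> 0" using q by linarith
      then have "t^2 * (P/2 + B*t/3) \<ge> 0" by simp
      moreover have "f0 t = D + t^2 * (P/2 + B*t/3)" unfolding f0_def by (simp add: algebra_simps power3_eq_cube power2_eq_square)
      moreover have "D \<ge> - (\<alpha>\<^sup>2 * E)"
      proof -
        have "1 + \<alpha>^2/6 + 5*\<alpha>/6 \<le> \<alpha>^2" using sq al unfolding power2_eq_square by (simp add: algebra_simps; linarith)
        then have "(1 + \<alpha>^2/6 + 5*\<alpha>/6) * E \<le> \<alpha>^2 * E" using E by (intro mult_right_mono) auto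
        then show ?thesis unfolding D_def by linarith
      qed
      ultimately show ?thesis unfolding h_def using True by simp
    next
      case False
      have "t powr (-\<alpha>) \<le> a powr (-\<alpha>)" using False a0 al0 by (intro powr_mono2') auto
      then have "g0 t \<ge> -E" unfolding g0_def using pa0 by simp
      moreover have "1 * E \<le> \<alpha>\<^sup>2 * E" using sq al E unfolding power2_eq_square by (intro mult_right_mono) linarith+
      ultimately show ?thesis unfolding h_def using False by simp
    qed
  qed
  have BIG: "\<forall>t>1/18. h'' t - h' t / t = - \<alpha> * (\<alpha> + 2) * t powr (- (\<alpha> + 2)) \<and>
              h'' t - h' t / t < 0 \<and>
              h' t / t = \<alpha> * t powr (- (\<alpha> + 2)) \<and> h' t / t > 0"
  proof (intro allI impI)
    fix t :: real assume t: "t > 1/18"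
    then have ta: "\<not> t \<le> a" "t > 0" unfolding a_def by auto
    have pt: "t powr (-(\<alpha>+1)) = t powr (-(\<alpha>+2)) * t"
      using powr_add[of t "-(\<alpha>+2)" 1] ta by (simp add: algebra_simps)
    have T: "t powr (-(\<alpha>+2)) > 0" using ta by simp
    have q: "h' t / t = \<alpha> * t powr (- (\<alpha> + 2))" unfolding h'_def g1_def using ta pt by simp
    have r: "h'' t = -\<alpha>*(\<alpha>+1) * t powr (-(\<alpha>+2))" unfolding h''_def g2_def using ta by simp
    have s: "h'' t - h' t / t = - \<alpha> * (\<alpha> + 2) * t powr (- (\<alpha> + 2))" unfolding q r by (simp add: algebra_simps)
    show "h'' t - h' t / t = - \<alpha> * (\<alpha> + 2) * t powr (- (\<alpha> + 2)) \<and>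
              h'' t - h' t / t < 0 \<and>
              h' t / t = \<alpha> * t powr (- (\<alpha> + 2)) \<and> h' t / t > 0"
      using s q T al0 by (simp add: mult_pos_pos)
  qed
  have SMALL: "\<forall>t. 0 < t \<and> t \<le> 1/18 \<longrightarrow>
          \<bar>h'' t - h' t / t\<bar> \<le> 972 * \<alpha>\<^sup>2 * E \<and>
          0 < h' t / t \<and> h' t / t \<le> 972 * \<alpha>\<^sup>2 * E"
  proof (intro allI impI)
    fix t :: real assume t: "0 < t \<and> t \<le> 1/18"
    then have ta: "t \<le> a" "t > 0" unfolding a_def by auto
    have q: "h' t / t = P + B*t" unfolding h'_def f1_def using ta by (simp add: field_simps power2_eq_square)
    have r: "h'' t - h' t / t = B*t" unfolding q unfolding h''_def f2_def using ta by simp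
    have Bt1: "B*t \<ge> B*a" using ta Bn by (simp add: mult_le_cancel_left)
    have Bt2: "B*t < 0" using ta Bn by (simp add: mult_neg_pos)
    have "P + B*a = 324*\<alpha>*E" unfolding P_def B_def a_def by (simp add: algebra_simps)
    then have c1: "0 < h' t / t" using q Bt1 al0 E by (smt (verit) mult_pos_pos)
    have "P \<le> 972 * \<alpha>\<^sup>2 * E"
    proof -
      have "324*\<alpha>*(\<alpha>+3) \<le> 972 * \<alpha>\<^sup>2" using sq al unfolding power2_eq_square by (simp add: algebra_simps; linarith)
      then show ?thesis unfolding P_def using E by (smt (verit) mult_right_mono)
    qed
    then have c2: "h' t / t \<le> 972 * \<alpha>\<^sup>2 * E" using q Bt2 by simp
    have "-(B*a) \<le> 972 * \<alpha>\<^sup>2 * E"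
    proof -
      have e: "-(B*a) = 324*\<alpha>*(\<alpha>+2)*E" unfolding B_def a_def by simp
      have "324*\<alpha>*(\<alpha>+2) \<le> 972 * \<alpha>\<^sup>2" using sq al unfolding power2_eq_square by (simp add: algebra_simps; linarith)
      then show ?thesis unfolding e using E by (smt (verit) mult_right_mono)
    qed
    then have c3: "\<bar>h'' t - h' t / t\<bar> \<le> 972 * \<alpha>\<^sup>2 * E" using r Bt1 Bt2 by simp
    show "\<bar>h'' t - h' t / t\<bar> \<le> 972 * \<alpha>\<^sup>2 * E \<and>
          0 < h' t / t \<and> h' t / t \<le> 972 * \<alpha>\<^sup>2 * E" using c1 c2 c3 by simp
  qed
  show ?thesis using D1 D2 C Z LB[unfolded E_def] BIG SMALL[unfolded E_def] by blast
qed

theorem lemma6p1: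
  fixes K N R :: real and n :: nat
  assumes "K \<ge> 0" and "n \<ge> 2" and "real n \<le> N" and "R > 0"
  defines "\<alpha> \<equiv> N * Hcoth (2 * sqrt (K / N) * R)"
  shows "\<exists>h h' h'' :: real \<Rightarrow> real.
    (\<forall>t\<ge>0. (h has_real_derivative h' t) (at t within {0..})) \<and>
    (\<forall>t\<ge>0. (h' has_real_derivative h'' t) (at t within {0..})) \<and>
    continuous_on {0..} h'' \<and>
    h' 0 = 0 \<and>
    (\<forall>t\<ge>0. h t \<ge> - (\<alpha>\<^sup>2 * 18 powr \<alpha>)) \<and>
    (\<forall>t>1/18. h'' t - h' t / t = - \<alpha> * (\<alpha> + 2) * t powr (- (\<alpha> + 2)) \<and>
              h'' t - h' t / t < 0 \<and>
              h' t / t = \<alpha> * t powr (- (\<alpha> + 2)) \<and> h' t / t > 0) \<and>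
    (\<forall>t. 0 < t \<and> t \<le> 1/18 \<longrightarrow>
          \<bar>h'' t - h' t / t\<bar> \<le> 972 * \<alpha>\<^sup>2 * 18 powr \<alpha> \<and>
          0 < h' t / t \<and> h' t / t \<le> 972 * \<alpha>\<^sup>2 * 18 powr \<alpha>)"
  proof -
  have N0: "N > 0" using assms(2,3) by simp
  have "Hcoth (2 * sqrt (K / N) * R) \<ge> 1" using assms(1,4) N0 by (intro Hcoth_ge1) simp
  then have "\<alpha> \<ge> N" unfolding \<alpha>_def using N0 by (simp add: mult_le_cancel_left1)
  then have "\<alpha> \<ge> 2" using assms(2,3) by linarith
  then show ?thesis by (rule main)
qed

end
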